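(* Let $G$ be a free abelian group, let $D$ be a subgroup of $G$, let $L\in{\mathrm{End}}_{\mathbb{Z}}(G)$ satisfy $L(D)\subseteq D$, and let $k$ be a positive integer such that the restriction of $L$ to $L^k(D)$ is a monomorphism $L^k(D)\to D$. Let $\overline{L}:G/D\to G/D$ be the induced endomorphism $g+D\mapsto L(g)+D$. Then for every finitely generated subgroup $X\subseteq G$, writing $\overline{X}:=(X+D)/D$, we have $$\eta_L(X)\leq \eta_{\overline{L}}(\overline{X})+k.$$
   Context: For an abelian group $M$, an endomorphism $f$ of $M$ and a finitely generated subgroup $Y\subseteq M$, $\eta_f(Y)$ denotes the least non-negative integer $k$ such that for every $m\geq k$ the restriction $f|_{f^m(Y)}:f^m(Y)\to f^{m+1}(Y)$ is an isomorphism (this integer exists by Fitting's Lemma over the noetherian ring $\mathbb{Z}$). *)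

theory Defs
  imports "HOL-Algebra.Free_Abelian_Groups"
begin

definition fg_subgroup :: "('a, 'b) monoid_scheme \<Rightarrow> 'a set \<Rightarrow> bool" where
  "fg_subgroup M Y \<longleftrightarrow> subgroup Y M \<and> (\<exists>F. finite F \<and> F \<subseteq> carrier M \<and> Y = generate M F)"

text \<open>eta_f(Y): least k such that for all m >= k the restriction of f to f^m(Y)
  is an isomorphism f^m(Y) -> f^(m+1)(Y) (f being a group endomorphism, this is
  bijectivity of the restriction).\<close>
definition eta :: "('a \<Rightarrow> 'a) \<Rightarrow> 'a set \<Rightarrow> nat" where
  "eta f Y = (LEAST k. \<forall>m\<ge>k. bij_betw f ((f ^^ m) ` Y) ((f ^^ Suc m) ` Y))"

end

theory Submission
  imports Defs
begin


definition addsub :: "'b::ab_group_add set \<Rightarrow> bool" where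
  "addsub A \<longleftrightarrow> 0 \<in> A \<and> (\<forall>x\<in>A. \<forall>y\<in>A. x - y \<in> A)"

lemma addsub_uminus: "addsub A \<Longrightarrow> x \<in> A \<Longrightarrow> -x \<in> A"
  unfolding addsub_def by (metis diff_0)

lemma addsub_add: "addsub A \<Longrightarrow> x \<in> A \<Longrightarrow> y \<in> A \<Longrightarrow> x + y \<in> A"
  unfolding addsub_def by (metis diff_0 diff_minus_eq_add)

lemma addsub_nat_mult: "addsub (A::int set) \<Longrightarrow> x \<in> A \<Longrightarrow> int n * x \<in> A"
proof (induction n)
  case 0 then show ?case by (simp add: addsub_def)
next
  case (Suc n) then show ?case using addsub_add[of A "int n * x" x] by (simp add: algebra_simps)
qed

lemma addsub_mult: "addsub (A::int set) \<Longrightarrow> x \<in> A \<Longrightarrow> k * x \<in> A"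
proof (cases "k \<ge> 0")
  case True
  assume a: "addsub A" "x \<in> A"
  then show ?thesis using addsub_nat_mult[OF a, of "nat k"] True by simp
next
  case False
  assume a: "addsub A" "x \<in> A"
  then have "int (nat (-k)) * x \<in> A" by (rule addsub_nat_mult)
  then have "- (int (nat (-k)) * x) \<in> A" using a addsub_uminus by blast
  then show ?thesis using False by simp
qed

lemma chain_le:
  assumes "\<And>m. A m \<subseteq> A (Suc m)" "m \<le> n" shows "A m \<subseteq> A n"
  using assms(2) by (induction n) (use assms(1) le_Suc_eq in auto)

lemma int_chain:
  fixes I :: "nat \<Rightarrow> int set"
  assumes sub: "\<And>m. addsub (I m)" and ch: "\<And>m. I m \<subseteq> I (Suc m)"
  shows "\<exists>N. \<forall>m\<ge>N. I m = I N"
proof (cases "\<exists>m. \<exists>x\<in>I m. x \<noteq> 0")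
  case False
  then have "I m = {0}" for m using sub[of m] unfolding addsub_def by auto
  then show ?thesis by auto
next
  case True
  then obtain m0 x where x: "x \<in> I m0" "x \<noteq> 0" by auto
  have "\<exists>m. \<exists>y\<in>I m. y > 0"
  proof (cases "x > 0")
    case False then show ?thesis using x addsub_uminus[OF sub] by (metis neg_0_less_iff_less linorder_neqE_linordered_idom)
  qed (use x in auto)
  define P where "P d \<longleftrightarrow> (\<exists>m. d \<in> I m) \<and> 0 < d" for d :: int
  have ex: "\<exists>d. P d" using \<open>\<exists>m. \<exists>y\<in>I m. y > 0\<close> P_def by auto
  define d where "d = (LEAST n::nat. P (int n))"
  have exn: "\<exists>n::nat. P (int n)" using ex P_def by (metis zero_less_imp_eq_int)
  have Pd: "P (int d)" unfolding d_def by (rule LeastI_ex[OF exn])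
  have dmin: "\<And>y. P (int y) \<Longrightarrow> d \<le> y" unfolding d_def by (rule Least_le)
  obtain N where N: "int d \<in> I N" using Pd P_def by auto
  have "I m = I N" if "m \<ge> N" for m
  proof
    show "I N \<subseteq> I m" using chain_le[of I, OF ch that] .
    show "I m \<subseteq> I N"
    proof
      fix y assume y: "y \<in> I m"
      have dm: "int d \<in> I m" using N \<open>I N \<subseteq> I m\<close> by auto
      have "y - (y div int d) * int d \<in> I m"
        using addsub_mult[OF sub dm, of "y div int d"] y sub[of m] unfolding addsub_def by auto
      moreover have "y - (y div int d) * int d = y mod int d" by (simp add: minus_div_mult_eq_mod)
      ultimately have ym: "y mod int d \<in> I m" by simp
      have dpos: "int d > 0" using Pd P_def by auto
      have "y mod int d = 0"
      proof (rule ccontr)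
        assume "y mod int d \<noteq> 0"
        then have "y mod int d > 0" using dpos using pos_mod_sign[of "int d" y] by linarith
        then have "P (int (nat (y mod int d)))" using ym P_def by auto
        then have h1: "d \<le> nat (y mod int d)" by (rule dmin)
        have h2: "y mod int d < int d" using dpos by simp
        have h3: "int (nat (y mod int d)) = y mod int d" using \<open>y mod int d > 0\<close> by simp
        have h4: "int d \<le> int (nat (y mod int d))" using h1 by (simp only: of_nat_le_iff)
        show False using h2 h3 h4 by linarith
      qed
      then have "y = (y div int d) * int d" using div_mult_mod_eq[of y "int d"] by simp
      moreover have "(y div int d) * int d \<in> I N" using addsub_mult[OF sub N, of "y div int d"] by simp
      ultimately show "y \<in> I N" by simp
    qed
  qed
  then show ?thesis by blast
qed

lemma fin_chain:
  fixes T :: "'x set"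
  assumes "finite T"
  shows "\<And>A::nat \<Rightarrow> ('x \<Rightarrow>\<^sub>0 int) set. (\<And>m. addsub (A m)) \<Longrightarrow> (\<And>m. A m \<subseteq> A (Suc m))
     \<Longrightarrow> (\<And>m. A m \<subseteq> {f. Poly_Mapping.keys f \<subseteq> T}) \<Longrightarrow> \<exists>N. \<forall>m\<ge>N. A m = A N"
  using assms
proof (induction T rule: finite_induct)
  case empty
  have "A m = {0}" for m
  proof -
    have "A m \<subseteq> {0}"
    proof
      fix x assume "x \<in> A m"
      then have "Poly_Mapping.keys x \<subseteq> {}" using empty(3)[of m] by blast
      then show "x \<in> {0}" by simp
    qed
    moreover have "0 \<in> A m" using empty(1)[of m] unfolding addsub_def by blast
    ultimately show ?thesis by blast
  qed
  then show ?case by auto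
next
  case (insert a T)
  define B where "B m = {f \<in> A m. Poly_Mapping.lookup f a = 0}" for m
  define I where "I m = (\<lambda>f. Poly_Mapping.lookup f a) ` A m" for m
  have "\<exists>N. \<forall>m\<ge>N. B m = B N"
  proof (rule insert.IH)
    show "addsub (B m)" for m using insert.prems(1)[of m] unfolding addsub_def B_def
      by (auto simp: lookup_minus)
    show "B m \<subseteq> B (Suc m)" for m using insert.prems(2)[of m] unfolding B_def by auto
    show "B m \<subseteq> {f. Poly_Mapping.keys f \<subseteq> T}" for m using insert.prems(3)[of m] unfolding B_def
      by (auto simp: in_keys_iff)
  qed
  then obtain N1 where N1: "\<forall>m\<ge>N1. B m = B N1" by auto
  have "\<exists>N. \<forall>m\<ge>N. I m = I N"
  proof (rule int_chain)
    show "addsub (I m)" for m using insert.prems(1)[of m] unfolding addsub_def I_def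
      by (auto simp: lookup_minus image_iff) (metis lookup_zero, metis lookup_minus)
    show "I m \<subseteq> I (Suc m)" for m using insert.prems(2)[of m] unfolding I_def by auto
  qed
  then obtain N2 where N2: "\<forall>m\<ge>N2. I m = I N2" by auto
  define N where "N = max N1 N2"
  have "A m = A N" if "m \<ge> N" for m
  proof
    show "A N \<subseteq> A m" using chain_le[of A, OF insert.prems(2) that] .
    show "A m \<subseteq> A N"
    proof
      fix f assume f: "f \<in> A m"
      have "Poly_Mapping.lookup f a \<in> I N" using N2 that f unfolding N_def I_def
        by (metis max.bounded_iff image_eqI order_refl)
      then obtain g where g: "g \<in> A N" "Poly_Mapping.lookup g a = Poly_Mapping.lookup f a" unfolding I_def by auto
      have gm: "g \<in> A m" using g(1) \<open>A N \<subseteq> A m\<close> by auto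
      have "f - g \<in> B m" unfolding B_def using f gm g(2) insert.prems(1)[of m]
        by (auto simp: addsub_def lookup_minus)
      then have "f - g \<in> B N" using N1 that unfolding N_def by (metis max.bounded_iff order_refl)
      then have fg: "f - g \<in> A N" unfolding B_def by auto
      have "(f - g) + g \<in> A N" by (rule addsub_add[OF insert.prems(1) fg g(1)])
      then show "f \<in> A N" by simp
    qed
  qed
  then show ?case by blast
qed


theorem lemma3p3:
  fixes S :: "'a set" and D X :: "('a \<Rightarrow>\<^sub>0 int) set"
    and L :: "('a \<Rightarrow>\<^sub>0 int) \<Rightarrow> ('a \<Rightarrow>\<^sub>0 int)"
    and Lbar :: "('a \<Rightarrow>\<^sub>0 int) set \<Rightarrow> ('a \<Rightarrow>\<^sub>0 int) set"
    and k :: nat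
  defines "G \<equiv> free_Abelian_group S"
  assumes D: "subgroup D G"
    and L: "L \<in> hom G G"
    and LD: "L ` D \<subseteq> D"
    and k: "k > 0"
    and mono: "inj_on L ((L ^^ k) ` D)" "L ` ((L ^^ k) ` D) \<subseteq> D"
    and Lbar: "\<And>g. g \<in> carrier G \<Longrightarrow> Lbar (r_coset G D g) = r_coset G D (L g)"
    and X: "fg_subgroup G X"
  shows "eta L X \<le> eta Lbar ((\<lambda>x. r_coset G D x) ` X) + k"
  
proof -
  have grp: "group G" unfolding G_def by simp
  have carr: "x \<in> carrier G \<longleftrightarrow> Poly_Mapping.keys x \<subseteq> S" for x unfolding G_def by simp
  have mult: "x \<otimes>\<^bsub>G\<^esub> y = x + y" for x y unfolding G_def by simp
  have oneG: "\<one>\<^bsub>G\<^esub> = 0" unfolding G_def by simp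
  have invG: "x \<in> carrier G \<Longrightarrow> inv\<^bsub>G\<^esub> x = - x" for x unfolding G_def by simp
  have cdiff: "x - y \<in> carrier G" if "x \<in> carrier G" "y \<in> carrier G" for x y
    using that keys_diff[of x y] unfolding carr by blast
  have czero: "0 \<in> carrier G" unfolding carr by simp
  have subdiff: "x - y \<in> H" if H: "subgroup H G" and "x \<in> H" "y \<in> H" for H x y
  proof -
    have "y \<in> carrier G" using subgroup.subset[OF H] that by auto
    then have "inv\<^bsub>G\<^esub> y = - y" by (rule invG)
    then have "- y \<in> H" using subgroup.m_inv_closed[OF H \<open>y \<in> H\<close>] by simp
    then have "x \<otimes>\<^bsub>G\<^esub> (- y) \<in> H" using subgroup.m_closed[OF H \<open>x \<in> H\<close>] by blast
    then show ?thesis by (simp add: mult)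
  qed
  have subzero: "0 \<in> H" if H: "subgroup H G" for H
    using subgroup.one_closed[OF H] oneG by simp
  have XG: "subgroup X G" and XF: "\<exists>F. finite F \<and> F \<subseteq> carrier G \<and> X = generate G F"
    using X unfolding fg_subgroup_def by auto
  have Dc: "D \<subseteq> carrier G" using subgroup.subset[OF D] .
  have Xc: "X \<subseteq> carrier G" using subgroup.subset[OF XG] .
  have Lc: "x \<in> carrier G \<Longrightarrow> L x \<in> carrier G" for x using L unfolding hom_def by auto
  have Ladd: "L (x + y) = L x + L y" if "x \<in> carrier G" "y \<in> carrier G" for x y
    using L that unfolding hom_def by (auto simp: mult)
  have L0: "L 0 = 0" using Ladd[OF czero czero] by simp
  have Ldiff: "L (x - y) = L x - L y" if "x \<in> carrier G" "y \<in> carrier G" for x y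
  proof -
    have "L x = L ((x - y) + y)" by simp
    also have "\<dots> = L (x - y) + L y" using Ladd[OF cdiff[OF that] that(2)] .
    finally show ?thesis by (simp add: algebra_simps)
  qed
  have Lpc: "x \<in> carrier G \<Longrightarrow> (L ^^ m) x \<in> carrier G" for x m
    by (induction m) (auto intro: Lc)
  have Lp0: "(L ^^ m) 0 = 0" for m by (induction m) (auto simp: L0)
  have Lpdiff: "(L ^^ m) (x - y) = (L ^^ m) x - (L ^^ m) y" if "x \<in> carrier G" "y \<in> carrier G" for x y m
    by (induction m) (auto simp: Ldiff Lpc that)
  have LpD: "(L ^^ m) x \<in> D" if "x \<in> D" for x m
    using that by (induction m) (use LD in auto)
  have rc: "r_coset G D x = (\<lambda>h. h + x) ` D" for x
    unfolding r_coset_def by (auto simp: mult)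
  have rceq: "r_coset G D x = r_coset G D y \<longleftrightarrow> x - y \<in> D" for x y
  proof
    assume "r_coset G D x = r_coset G D y"
    then have "0 + x \<in> (\<lambda>h. h + y) ` D" using subzero[OF D] unfolding rc by (metis image_eqI)
    then obtain h where "h \<in> D" "x = h + y" by auto
    then show "x - y \<in> D" by simp
  next
    assume xy: "x - y \<in> D"
    have s1: "(\<lambda>h. h + x) ` D \<subseteq> (\<lambda>h. h + y) ` D"
    proof
      fix z assume "z \<in> (\<lambda>h. h + x) ` D"
      then obtain h where h: "h \<in> D" "z = h + x" by auto
      have "h - (0 - (x - y)) \<in> D" using subdiff[OF D h(1) subdiff[OF D subzero[OF D] xy]] .
      moreover have "z = (h - (0 - (x - y))) + y" using h by simp
      ultimately show "z \<in> (\<lambda>h. h + y) ` D" by blast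
    qed
    have s2: "(\<lambda>h. h + y) ` D \<subseteq> (\<lambda>h. h + x) ` D"
    proof
      fix z assume "z \<in> (\<lambda>h. h + y) ` D"
      then obtain h where h: "h \<in> D" "z = h + y" by auto
      have "h - (x - y) \<in> D" using subdiff[OF D h(1) xy] .
      moreover have "z = (h - (x - y)) + x" using h by simp
      ultimately show "z \<in> (\<lambda>h. h + x) ` D" by blast
    qed
    show "r_coset G D x = r_coset G D y" unfolding rc using s1 s2 by blast
  qed
  have Lbarp: "(Lbar ^^ m) (r_coset G D x) = r_coset G D ((L ^^ m) x)" if "x \<in> carrier G" for x m
    by (induction m) (auto simp: Lbar Lpc that)
  define Xb where "Xb = (\<lambda>x. r_coset G D x) ` X"
  have Xbm: "(Lbar ^^ m) ` Xb = (\<lambda>x. r_coset G D ((L ^^ m) x)) ` X" for m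
    unfolding Xb_def image_comp using Lbarp Xc by (auto simp: image_iff) 
  have bijinj: "bij_betw f ((f ^^ m) ` Y) ((f ^^ Suc m) ` Y) \<longleftrightarrow> inj_on f ((f ^^ m) ` Y)"
    for f :: "'c \<Rightarrow> 'c" and Y m
    by (simp add: bij_betw_def image_comp)
  define A where "A m = {x \<in> X. (L ^^ m) x \<in> D}" for m
  obtain F where F: "finite F" "F \<subseteq> carrier G" "X = generate G F" using XF by blast
  define T where "T = \<Union> (Poly_Mapping.keys ` F)"
  have fT: "finite T" unfolding T_def using F(1) by simp
  have XT: "X \<subseteq> {f. Poly_Mapping.keys f \<subseteq> T}"
  proof
    fix x assume "x \<in> X"
    then have "x \<in> generate G F" using F(3) by simp
    then show "x \<in> {f. Poly_Mapping.keys f \<subseteq> T}"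
    proof (induction rule: generate.induct)
      case one then show ?case by (simp add: oneG)
    next
      case (incl h) then show ?case unfolding T_def by auto
    next
      case (inv h) then have "inv\<^bsub>G\<^esub> h = - h" using F(2) invG by auto
      then show ?case using inv unfolding T_def by auto
    next
      case (eng h1 h2) then show ?case using keys_add[of h1 h2] by (auto simp: mult)
    qed
  qed
  have "\<exists>N. \<forall>m\<ge>N. A m = A N"
  proof (rule fin_chain[OF fT])
    show "addsub (A m)" for m unfolding addsub_def A_def
      using subzero[OF XG] subzero[OF D] Lp0 subdiff[OF XG] subdiff[OF D] Lpdiff Xc by (auto simp: subset_iff)
    show "A m \<subseteq> A (Suc m)" for m unfolding A_def using LD by auto
    show "A m \<subseteq> {f. Poly_Mapping.keys f \<subseteq> T}" for m unfolding A_def using XT by auto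
  qed
  then obtain N where N: "\<forall>m\<ge>N. A m = A N" by auto
  define P where "P n \<longleftrightarrow> (\<forall>m\<ge>n. bij_betw Lbar ((Lbar ^^ m) ` Xb) ((Lbar ^^ Suc m) ` Xb))" for n
  have "P N" unfolding P_def bijinj
  proof (intro allI impI)
    fix m assume m: "N \<le> m"
    show "inj_on Lbar ((Lbar ^^ m) ` Xb)"
    proof (rule inj_onI)
      fix u v assume "u \<in> (Lbar ^^ m) ` Xb" "v \<in> (Lbar ^^ m) ` Xb" and uv: "Lbar u = Lbar v"
      then obtain x y where xy: "x \<in> X" "y \<in> X" "u = r_coset G D ((L ^^ m) x)" "v = r_coset G D ((L ^^ m) y)"
        unfolding Xbm by auto
      have xyc: "x \<in> carrier G" "y \<in> carrier G" using Xc xy by auto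
      have "r_coset G D ((L ^^ Suc m) x) = r_coset G D ((L ^^ Suc m) y)"
      proof -
        have cx: "(L ^^ m) x \<in> carrier G" "(L ^^ m) y \<in> carrier G" using Lpc Xc xy by auto
        have "r_coset G D (L ((L ^^ m) x)) = r_coset G D (L ((L ^^ m) y))"
          using uv unfolding xy(3,4) Lbar[OF cx(1)] Lbar[OF cx(2)] .
        then show ?thesis by simp
      qed
      then have "(L ^^ Suc m) (x - y) \<in> D" unfolding rceq using Lpdiff[OF xyc, of "Suc m"] by simp
      then have "x - y \<in> A (Suc m)" unfolding A_def using subdiff[OF XG xy(1,2)] by auto
      then have "x - y \<in> A m" using N m by (metis le_SucI)
      then have "(L ^^ m) x - (L ^^ m) y \<in> D" unfolding A_def using Lpdiff[OF xyc, of m] by simp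
      then show "u = v" using xy rceq by auto
    qed
  qed
  define n where "n = eta Lbar Xb"
  have Pn: "P n" unfolding n_def eta_def P_def[symmetric] by (rule LeastI[of P N, OF \<open>P N\<close>])
  have down: "(L ^^ j) x \<in> D" if "x \<in> X" "n \<le> j" "(L ^^ Suc j) x \<in> D" for x j
  proof -
    have "inj_on Lbar ((Lbar ^^ j) ` Xb)" using Pn that(2) unfolding P_def bijinj by auto
    moreover have "r_coset G D ((L ^^ j) x) \<in> (Lbar ^^ j) ` Xb" using that(1) unfolding Xbm by auto
    moreover have "r_coset G D ((L ^^ j) 0) \<in> (Lbar ^^ j) ` Xb" using subzero[OF XG] unfolding Xbm by auto
    moreover have "Lbar (r_coset G D ((L ^^ j) x)) = Lbar (r_coset G D ((L ^^ j) 0))"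
    proof -
      have cx: "(L ^^ j) x \<in> carrier G" using Lpc Xc that(1) by auto
      have "r_coset G D (L ((L ^^ j) x)) = r_coset G D (L 0)"
        unfolding rceq using that(3) L0 by simp
      then show ?thesis unfolding Lbar[OF cx] Lp0 Lbar[OF czero] .
    qed
    ultimately have "r_coset G D ((L ^^ j) x) = r_coset G D ((L ^^ j) 0)" by (meson inj_onD)
    then show ?thesis using rceq Lp0 by auto
  qed
  have Lpadd: "(L ^^ (a + b)) x = (L ^^ a) ((L ^^ b) x)" for a b x by (simp add: funpow_add)
  have "\<forall>m\<ge>n + k. bij_betw L ((L ^^ m) ` X) ((L ^^ Suc m) ` X)"
    unfolding bijinj
  proof (intro allI impI inj_onI)
    fix m u v assume m: "n + k \<le> m" and "u \<in> (L ^^ m) ` X" "v \<in> (L ^^ m) ` X" and uv: "L u = L v"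
    then obtain x y where xy: "x \<in> X" "y \<in> X" "u = (L ^^ m) x" "v = (L ^^ m) y" by auto
    have xyc: "x \<in> carrier G" "y \<in> carrier G" using Xc xy by auto
    define z where "z = x - y"
    have zX: "z \<in> X" unfolding z_def using subdiff[OF XG xy(1,2)] .
    have zc: "z \<in> carrier G" using zX Xc by auto
    have Lz: "(L ^^ Suc m) z = 0" unfolding z_def using uv xy Lpdiff[OF xyc, of "Suc m"] by simp
    have "\<forall>i. i \<le> Suc m - n \<longrightarrow> (L ^^ (Suc m - i)) z \<in> D"
    proof (intro allI)
      fix i show "i \<le> Suc m - n \<longrightarrow> (L ^^ (Suc m - i)) z \<in> D"
      proof (induction i)
        case 0 then show ?case using Lz subzero[OF D] by simp
      next
        case (Suc i)
        show ?case
        proof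
          assume i: "Suc i \<le> Suc m - n"
          then have "(L ^^ (Suc m - i)) z \<in> D" using Suc by simp
          moreover have "Suc m - i = Suc (Suc m - Suc i)" using i by simp
          ultimately show "(L ^^ (Suc m - Suc i)) z \<in> D" using down[OF zX] i by auto
        qed
      qed
    qed
    then have all: "\<And>i. i \<le> Suc m - n \<Longrightarrow> (L ^^ (Suc m - i)) z \<in> D" by blast
    have e1: "Suc m - (Suc m - n) = n" using m by simp
    have "(L ^^ (Suc m - (Suc m - n))) z \<in> D" by (rule all) simp
    then have Ln: "(L ^^ n) z \<in> D" unfolding e1 .
    have e2: "m - k = (m - k - n) + n" using m by simp
    have "(L ^^ ((m - k - n) + n)) z \<in> D" unfolding Lpadd by (rule LpD[OF Ln])
    then have Lmk: "(L ^^ (m - k)) z \<in> D" unfolding e2[symmetric] .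
    have e3: "m = k + (m - k)" using m by simp
    have "(L ^^ (k + (m - k))) z \<in> (L ^^ k) ` D" unfolding Lpadd using Lmk by (rule imageI)
    then have w: "(L ^^ m) z \<in> (L ^^ k) ` D" unfolding e3[symmetric] .
    have w0: "0 \<in> (L ^^ k) ` D" using Lp0[of k] imageI[OF subzero[OF D], of "L ^^ k"] by simp
    have "L ((L ^^ m) z) = L 0" using Lz L0 by simp
    then have "(L ^^ m) z = 0" using inj_onD[OF mono(1) _ w w0] by simp
    then show "u = v" unfolding z_def using xy Lpdiff[OF xyc, of m] by simp
  qed
  then have "eta L X \<le> n + k" unfolding eta_def by (rule Least_le)
  then show ?thesis unfolding n_def Xb_def .
qed

end
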